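(* For every signed composition $\alpha=(a_1,\dots,a_k)$ of $n$, $$X_{\{0\}}\cdot\widetilde{S}_\alpha=X^0_{|\alpha|},$$ where the product is taken in $\mathbb{Q}B_n$.
   Context: $B_n$: signed permutations $w=w_1\dots w_n$ (bijections of $\{\pm1,\dots,\pm n\}$ with $w(-i)=-w(i)$), product in $\mathbb{Q}B_n$ given by composition $(uv)(i)=u(v(i))$; values ordered $\cdots<-2<-1<1<2<\cdots$, $w_0=0$; $\mathrm{Des}(w)=\{i\in\{0,\dots,n-1\}:w_i>w_{i+1}\}$; $X_J=\sum_{\mathrm{Des}(w)\subseteq J}w$. So $X_{\{0\}}$ is the sum of all $w$ with $w_1<\dots<w_n$. A signed composition of $n$ is a sequence $\alpha=(a_1,\dots,a_k)$ of nonzero integers with $\sum|a_i|=n$; $|\alpha|=(|a_1|,\dots,|a_k|)$. $\widetilde{S}_\alpha$ is the sum of all $w\in B_n$ such that, on each of the successive intervals of $[n]$ of lengths $|a_1|,\dots,|a_k|$, the entries $w_j$ are increasing and all have the sign of the corresponding $a_i$. For an ordinary composition $\beta=(b_1,\dots,b_h)$ of $n$, with associated subset $J_\beta=\{b_1,b_1+b_2,\dots,b_1+\dots+b_{h-1}\}\subseteq[n-1]$, $X^0_\beta=X_{\{0\}\cup J_\beta}$. *)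

theory Defs
  imports Complex_Main
begin

text \<open>A signed permutation w of [n] is encoded by its window list [w_1, ..., w_n] of
nonzero integers whose absolute values are exactly 1..n.
Elements of the group algebra QB_n are functions from such lists to rat (zero outside B_n).\<close>

definition signed_perms :: "nat \<Rightarrow> int list set" where
  "signed_perms n = {w. length w = n \<and> set (map abs w) = {1..int n}}"

definition sp_apply :: "int list \<Rightarrow> int \<Rightarrow> int" where
  "sp_apply w x = (if x = 0 then 0 else sgn x * w ! (nat \<bar>x\<bar> - 1))"

definition sp_comp :: "int list \<Rightarrow> int list \<Rightarrow> int list" where
  "sp_comp u v = map (sp_apply u) v"

definition qb_mult :: "nat \<Rightarrow> (int list \<Rightarrow> rat) \<Rightarrow> (int list \<Rightarrow> rat) \<Rightarrow> (int list \<Rightarrow> rat)" where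
  "qb_mult n f g = (\<lambda>w. \<Sum>(u, v) \<in> signed_perms n \<times> signed_perms n.
                         if sp_comp u v = w then f u * g v else 0)"

definition wpos :: "int list \<Rightarrow> nat \<Rightarrow> int" where
  "wpos w i = (if i = 0 then 0 else w ! (i - 1))"

definition Des :: "nat \<Rightarrow> int list \<Rightarrow> nat set" where
  "Des n w = {i \<in> {0..<n}. wpos w i > wpos w (Suc i)}"

definition X :: "nat \<Rightarrow> nat set \<Rightarrow> (int list \<Rightarrow> rat)" where
  "X n J = (\<lambda>w. if w \<in> signed_perms n \<and> Des n w \<subseteq> J then 1 else 0)"

definition signed_composition :: "nat \<Rightarrow> int list \<Rightarrow> bool" where
  "signed_composition n \<alpha> \<longleftrightarrow> (\<forall>a \<in> set \<alpha>. a \<noteq> 0) \<and> (\<Sum>a\<leftarrow>\<alpha>. \<bar>a\<bar>) = int n"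

definition abs_comp :: "int list \<Rightarrow> nat list" where
  "abs_comp \<alpha> = map (\<lambda>a. nat \<bar>a\<bar>) \<alpha>"

definition psum :: "nat list \<Rightarrow> nat \<Rightarrow> nat" where
  "psum \<beta> i = sum_list (take i \<beta>)"

definition Jcomp :: "nat list \<Rightarrow> nat set" where
  "Jcomp \<beta> = {psum \<beta> i | i. 1 \<le> i \<and> i < length \<beta>}"

definition X0 :: "nat \<Rightarrow> nat list \<Rightarrow> (int list \<Rightarrow> rat)" where
  "X0 n \<beta> = X n ({0} \<union> Jcomp \<beta>)"

definition Stilde :: "nat \<Rightarrow> int list \<Rightarrow> (int list \<Rightarrow> rat)" where
  "Stilde n \<alpha> = (\<lambda>w. if w \<in> signed_perms n \<and>
      (\<forall>i < length \<alpha>. \<forall>j.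
         psum (abs_comp \<alpha>) i < j \<and> j \<le> psum (abs_comp \<alpha>) (Suc i) \<longrightarrow>
           sgn (wpos w j) = sgn (\<alpha> ! i) \<and>
           (j < psum (abs_comp \<alpha>) (Suc i) \<longrightarrow> wpos w j < wpos w (Suc j)))
    then 1 else 0)"

end

theory Submission
  imports Defs
begin

lemma sc_nz: "signed_composition n \<alpha> \<Longrightarrow> i < length \<alpha> \<Longrightarrow> \<alpha> ! i \<noteq> 0"
  unfolding signed_composition_def by auto

lemma len_ac[simp]: "length (abs_comp \<alpha>) = length \<alpha>"
  by (simp add: abs_comp_def)

lemma psum_Suc: "i < length \<beta> \<Longrightarrow> psum \<beta> (Suc i) = psum \<beta> i + \<beta> ! i"
  by (simp add: psum_def take_Suc_conv_app_nth)

lemma psum_ge: "i \<ge> length \<beta> \<Longrightarrow> psum \<beta> i = sum_list \<beta>"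
  by (simp add: psum_def)

lemma psum_Suc_mono: "psum \<beta> i \<le> psum \<beta> (Suc i)"
  by (cases "i < length \<beta>") (auto simp: psum_Suc psum_ge)

lemma psum_mono: "i \<le> k \<Longrightarrow> psum \<beta> i \<le> psum \<beta> k"
  by (rule lift_Suc_mono_le[of "psum \<beta>"]) (auto simp: psum_Suc_mono)

lemma psum_0[simp]: "psum \<beta> 0 = 0" by (simp add: psum_def)

lemma ac_sum: "signed_composition n \<alpha> \<Longrightarrow> sum_list (abs_comp \<alpha>) = n"
proof -
  have "int (sum_list (map (\<lambda>a. nat \<bar>a\<bar>) xs)) = (\<Sum>a\<leftarrow>xs. \<bar>a\<bar>)" for xs :: "int list"
    by (induction xs) auto
  then show "signed_composition n \<alpha> \<Longrightarrow> ?thesis"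
    unfolding signed_composition_def abs_comp_def by (metis of_nat_eq_iff)
qed

lemma ac_pos: "signed_composition n \<alpha> \<Longrightarrow> i < length \<alpha> \<Longrightarrow> abs_comp \<alpha> ! i > 0"
  using sc_nz[of n \<alpha> i] by (simp add: abs_comp_def)

lemma psum_len: "signed_composition n \<alpha> \<Longrightarrow> psum (abs_comp \<alpha>) (length \<alpha>) = n"
  using ac_sum psum_ge[of "abs_comp \<alpha>"] by simp

lemma psum_le_n: "signed_composition n \<alpha> \<Longrightarrow> psum (abs_comp \<alpha>) i \<le> n"
  using ac_sum psum_ge[of "abs_comp \<alpha>"] psum_mono[of i "max i (length \<alpha>)" "abs_comp \<alpha>"]
  by (simp add: psum_ge)

lemma psum_strict1: "signed_composition n \<alpha> \<Longrightarrow> i < length \<alpha> \<Longrightarrow>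
    psum (abs_comp \<alpha>) i < psum (abs_comp \<alpha>) (Suc i)"
  using ac_pos[of n \<alpha> i] psum_Suc[of i "abs_comp \<alpha>"] by simp

lemma blk_exists_aux: "signed_composition n \<alpha> \<Longrightarrow> m \<le> length \<alpha> \<Longrightarrow> 0 < j \<Longrightarrow>
   j \<le> psum (abs_comp \<alpha>) m \<Longrightarrow>
   \<exists>i<length \<alpha>. psum (abs_comp \<alpha>) i < j \<and> j \<le> psum (abs_comp \<alpha>) (Suc i)"
proof (induction m)
  case 0 then show ?case by simp
next
  case (Suc m)
  show ?case
  proof (cases "j \<le> psum (abs_comp \<alpha>) m")
    case True with Suc show ?thesis by simp
  next
    case False with Suc show ?thesis by (intro exI[of _ m]) auto
  qed
qed

lemma blk_exists: "signed_composition n \<alpha> \<Longrightarrow> 0 < j \<Longrightarrow> j \<le> n \<Longrightarrow>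
   \<exists>i<length \<alpha>. psum (abs_comp \<alpha>) i < j \<and> j \<le> psum (abs_comp \<alpha>) (Suc i)"
  using blk_exists_aux[of n \<alpha> "length \<alpha>" j] psum_len[of n \<alpha>] by simp

lemma blk_unique: "i < length \<alpha> \<Longrightarrow> i' < length \<alpha> \<Longrightarrow>
   psum (abs_comp \<alpha>) i < j \<Longrightarrow> j \<le> psum (abs_comp \<alpha>) (Suc i) \<Longrightarrow>
   psum (abs_comp \<alpha>) i' < j \<Longrightarrow> j \<le> psum (abs_comp \<alpha>) (Suc i') \<Longrightarrow> i = i'"
proof (rule ccontr)
  assume a: "psum (abs_comp \<alpha>) i < j" "j \<le> psum (abs_comp \<alpha>) (Suc i)"
     "psum (abs_comp \<alpha>) i' < j" "j \<le> psum (abs_comp \<alpha>) (Suc i')" "i \<noteq> i'"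
  show False
  proof (cases "i < i'")
    case True
    then have "psum (abs_comp \<alpha>) (Suc i) \<le> psum (abs_comp \<alpha>) i'" by (intro psum_mono) simp
    with a show False by simp
  next
    case False
    then have "psum (abs_comp \<alpha>) (Suc i') \<le> psum (abs_comp \<alpha>) i" using a(5) by (intro psum_mono) simp
    with a show False by simp
  qed
qed

lemma notJ_same_blk: "signed_composition n \<alpha> \<Longrightarrow> 1 \<le> j \<Longrightarrow> j < n \<Longrightarrow>
   j \<notin> Jcomp (abs_comp \<alpha>) \<Longrightarrow>
   \<exists>i<length \<alpha>. psum (abs_comp \<alpha>) i < j \<and> j < psum (abs_comp \<alpha>) (Suc i)"
proof -
  assume sc: "signed_composition n \<alpha>" and j: "1 \<le> j" "j < n" "j \<notin> Jcomp (abs_comp \<alpha>)"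
  obtain i where i: "i < length \<alpha>" "psum (abs_comp \<alpha>) i < j" "j \<le> psum (abs_comp \<alpha>) (Suc i)"
    using blk_exists[OF sc, of j] j by auto
  have "j \<noteq> psum (abs_comp \<alpha>) (Suc i)"
  proof
    assume e: "j = psum (abs_comp \<alpha>) (Suc i)"
    have "Suc i \<noteq> length \<alpha>" using e psum_len[OF sc] j by auto
    then have "Suc i < length \<alpha>" using i by simp
    then have "j \<in> Jcomp (abs_comp \<alpha>)" unfolding Jcomp_def using e by auto
    with j show False by simp
  qed
  with i show ?thesis by auto
qed

lemma same_blk_notJ: "i < length \<alpha> \<Longrightarrow> psum (abs_comp \<alpha>) i < j \<Longrightarrow> j < psum (abs_comp \<alpha>) (Suc i)
   \<Longrightarrow> j \<notin> Jcomp (abs_comp \<alpha>)"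
proof
  assume a: "psum (abs_comp \<alpha>) i < j" "j < psum (abs_comp \<alpha>) (Suc i)" "j \<in> Jcomp (abs_comp \<alpha>)"
  then obtain k where k: "j = psum (abs_comp \<alpha>) k" unfolding Jcomp_def by auto
  show False
  proof (cases "k \<le> i")
    case True then show False using psum_mono[of k i "abs_comp \<alpha>"] a k by simp
  next
    case False then show False using psum_mono[of "Suc i" k "abs_comp \<alpha>"] a k by simp
  qed
qed

definition sg :: "int list \<Rightarrow> nat \<Rightarrow> int" where
  "sg \<alpha> j = (if \<exists>i<length \<alpha>. psum (abs_comp \<alpha>) i < j \<and> j \<le> psum (abs_comp \<alpha>) (Suc i) \<and> 0 < \<alpha> ! i
     then 1 else -1)"

lemma sg_blk: "signed_composition n \<alpha> \<Longrightarrow> i < length \<alpha> \<Longrightarrow> psum (abs_comp \<alpha>) i < j \<Longrightarrow>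
   j \<le> psum (abs_comp \<alpha>) (Suc i) \<Longrightarrow> sg \<alpha> j = sgn (\<alpha> ! i)"
  unfolding sg_def using sc_nz[of n \<alpha> i] blk_unique[of i \<alpha>]
  by (auto simp: sgn_if)

lemma sg_pm: "sg \<alpha> j * sg \<alpha> j = 1" "sg \<alpha> j \<noteq> 0" "\<bar>sg \<alpha> j\<bar> = 1"
  unfolding sg_def by auto


lemma sp_len: "w \<in> signed_perms n \<Longrightarrow> length w = n"
  by (simp add: signed_perms_def)

lemma sp_abs_dist: "w \<in> signed_perms n \<Longrightarrow> distinct (map abs w)"
  by (rule card_distinct) (simp add: signed_perms_def)

lemma sp_dist: "w \<in> signed_perms n \<Longrightarrow> distinct w"
  using sp_abs_dist distinct_map by blast

lemma sp_nth: "w \<in> signed_perms n \<Longrightarrow> k < n \<Longrightarrow> w ! k \<noteq> 0 \<and> \<bar>w ! k\<bar> \<le> int n"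
proof -
  assume w: "w \<in> signed_perms n" "k < n"
  then have "w ! k \<in> set w" by (simp add: signed_perms_def)
  then have "\<bar>w ! k\<bar> \<in> abs ` set w" by blast
  moreover have "abs ` set w = {1..int n}" using w by (simp add: signed_perms_def)
  ultimately have "\<bar>w ! k\<bar> \<in> {1..int n}" by simp
  then show ?thesis by auto
qed

lemma sp_apply_abs: "x \<noteq> 0 \<Longrightarrow> \<bar>sp_apply u x\<bar> = \<bar>u ! (nat \<bar>x\<bar> - 1)\<bar>"
  by (simp add: sp_apply_def abs_mult abs_sgn_eq)

lemma comp_SP: "u \<in> signed_perms n \<Longrightarrow> v \<in> signed_perms n \<Longrightarrow> sp_comp u v \<in> signed_perms n"
proof -
  assume u: "u \<in> signed_perms n" and v: "v \<in> signed_perms n"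
  have "set (map abs (sp_comp u v)) = (\<lambda>k. \<bar>u ! (nat k - 1)\<bar>) ` set (map abs v)"
  proof -
    have z: "\<And>x. x \<in> set v \<Longrightarrow> x \<noteq> 0" using sp_nth[OF v] sp_len[OF v] by (auto simp: in_set_conv_nth)
    have "set (map abs (sp_comp u v)) = (\<lambda>x. \<bar>sp_apply u x\<bar>) ` set v" by (simp add: sp_comp_def image_image)
    also have "\<dots> = (\<lambda>x. \<bar>u ! (nat \<bar>x\<bar> - 1)\<bar>) ` set v" using z sp_apply_abs by (intro image_cong) auto
    also have "\<dots> = (\<lambda>k. \<bar>u ! (nat k - 1)\<bar>) ` set (map abs v)" by (simp add: image_image)
    finally show ?thesis .
  qed
  also have "\<dots> = (\<lambda>k. \<bar>u ! (nat k - 1)\<bar>) ` {1..int n}" using v by (simp add: signed_perms_def)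
  also have "\<dots> = set (map abs u)"
  proof -
    have "(\<lambda>k. \<bar>u ! (nat k - 1)\<bar>) ` {1..int n} = (\<lambda>i. \<bar>u ! i\<bar>) ` {0..<n}"
    proof (rule set_eqI, rule iffI)
      fix y assume "y \<in> (\<lambda>k. \<bar>u ! (nat k - 1)\<bar>) ` {1..int n}"
      then obtain k where "k \<in> {1..int n}" "y = \<bar>u ! (nat k - 1)\<bar>" by auto
      then show "y \<in> (\<lambda>i. \<bar>u ! i\<bar>) ` {0..<n}" by (intro image_eqI[of _ _ "nat k - 1"]) auto
    next
      fix y assume "y \<in> (\<lambda>i. \<bar>u ! i\<bar>) ` {0..<n}"
      then obtain i where "i < n" "y = \<bar>u ! i\<bar>" by auto
      then show "y \<in> (\<lambda>k. \<bar>u ! (nat k - 1)\<bar>) ` {1..int n}"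
      proof (intro image_eqI[of _ _ "1 + int i"])
        have "nat (1 + int i) = Suc i" by arith
        then show "y = \<bar>u ! (nat (1 + int i) - 1)\<bar>" using \<open>y = \<bar>u ! i\<bar>\<close> by simp
      qed (use \<open>i < n\<close> in auto)
    qed
    also have "\<dots> = set (map abs u)"
    proof -
      have "set u = (\<lambda>i. u ! i) ` {0..<n}" using sp_len[OF u] by (metis map_nth set_map set_upt)
      then show ?thesis by (simp add: image_image)
    qed
    finally show ?thesis .
  qed
  finally show ?thesis using u v by (simp add: signed_perms_def sp_comp_def image_image)
qed

lemma sp_apply_inj: "u \<in> signed_perms n \<Longrightarrow> x \<noteq> 0 \<Longrightarrow> y \<noteq> 0 \<Longrightarrow> \<bar>x\<bar> \<le> int n \<Longrightarrow> \<bar>y\<bar> \<le> int n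
   \<Longrightarrow> sp_apply u x = sp_apply u y \<Longrightarrow> x = y"
proof -
  assume u: "u \<in> signed_perms n" and x: "x \<noteq> 0" "\<bar>x\<bar> \<le> int n" and y: "y \<noteq> 0" "\<bar>y\<bar> \<le> int n"
    and e: "sp_apply u x = sp_apply u y"
  have "\<bar>u ! (nat \<bar>x\<bar> - 1)\<bar> = \<bar>u ! (nat \<bar>y\<bar> - 1)\<bar>" using e sp_apply_abs[OF x(1), of u] sp_apply_abs[OF y(1), of u] by simp
  moreover have xn: "nat \<bar>x\<bar> - 1 < n" "nat \<bar>y\<bar> - 1 < n" using x y by auto
  ultimately have "map abs u ! (nat \<bar>x\<bar> - 1) = map abs u ! (nat \<bar>y\<bar> - 1)" using sp_len[OF u] by simp
  then have "nat \<bar>x\<bar> - 1 = nat \<bar>y\<bar> - 1"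
    using nth_eq_iff_index_eq[OF sp_abs_dist[OF u]] x y sp_len[OF u] by simp
  moreover have "nat \<bar>x\<bar> \<ge> 1" "nat \<bar>y\<bar> \<ge> 1" using x y by auto
  ultimately have "nat \<bar>x\<bar> = nat \<bar>y\<bar>" by linarith
  then have ax: "\<bar>x\<bar> = \<bar>y\<bar>" by simp
  have "u ! (nat \<bar>x\<bar> - 1) \<noteq> 0" using sp_nth[OF u xn(1)] by simp
  moreover have "sgn x * u ! (nat \<bar>x\<bar> - 1) = sgn y * u ! (nat \<bar>y\<bar> - 1)"
    using e x y by (simp add: sp_apply_def)
  ultimately have "sgn x = sgn y" using ax by simp
  with ax show "x = y" by (metis sgn_mult_abs)
qed

lemma comp_inj: "u \<in> signed_perms n \<Longrightarrow> v \<in> signed_perms n \<Longrightarrow> v' \<in> signed_perms n \<Longrightarrow>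
   sp_comp u v = sp_comp u v' \<Longrightarrow> v = v'"
proof -
  assume u: "u \<in> signed_perms n" and v: "v \<in> signed_perms n" and v': "v' \<in> signed_perms n"
    and e: "sp_comp u v = sp_comp u v'"
  show "v = v'"
  proof (rule nth_equalityI)
    show "length v = length v'" using v v' by (simp add: sp_len)
    fix i assume "i < length v"
    then have i: "i < n" using sp_len[OF v] by simp
    have "sp_apply u (v ! i) = sp_apply u (v' ! i)"
      using arg_cong[OF e, of "\<lambda>l. l ! i"] i sp_len[OF v] sp_len[OF v'] by (simp add: sp_comp_def)
    then show "v ! i = v' ! i" using sp_apply_inj[OF u] sp_nth[OF v i] sp_nth[OF v' i] by blast
  qed
qed

lemma incr_iff: "X n {0} u = 1 \<longleftrightarrow> u \<in> signed_perms n \<and> sorted_wrt (<) u"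
proof
  assume "X n {0} u = 1"
  then have u: "u \<in> signed_perms n" and d: "Des n u \<subseteq> {0}" by (auto simp: X_def split: if_splits)
  have "\<forall>i. Suc i < length u \<longrightarrow> u ! i < u ! Suc i"
  proof (intro allI impI)
    fix i assume i: "Suc i < length u"
    then have "Suc i \<notin> Des n u" using d by auto
    then have "u ! i \<le> u ! Suc i" using i sp_len[OF u] by (auto simp: Des_def wpos_def)
    moreover have "u ! i \<noteq> u ! Suc i" using nth_eq_iff_index_eq[OF sp_dist[OF u]] i by simp
    ultimately show "u ! i < u ! Suc i" by simp
  qed
  then show "u \<in> signed_perms n \<and> sorted_wrt (<) u" using u
    by (simp add: sorted_wrt_iff_nth_Suc_transp)
next
  assume a: "u \<in> signed_perms n \<and> sorted_wrt (<) u"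
  have "Des n u \<subseteq> {0}"
  proof
    fix i assume i: "i \<in> Des n u"
    show "i \<in> {0}"
    proof (rule ccontr)
      assume "i \<notin> {0}"
      then obtain k where k: "i = Suc k" by (cases i) auto
      have "Suc k < length u" using i k sp_len[of u n] a by (auto simp: Des_def)
      then have "u ! k < u ! Suc k" using a by (simp add: sorted_wrt_iff_nth_Suc_transp)
      then show False using i k by (auto simp: Des_def wpos_def)
    qed
  qed
  then show "X n {0} u = 1" using a by (simp add: X_def)
qed

lemma sp_mono: "u \<in> signed_perms n \<Longrightarrow> sorted_wrt (<) u \<Longrightarrow> x \<noteq> 0 \<Longrightarrow> y \<noteq> 0 \<Longrightarrow>
   \<bar>x\<bar> \<le> int n \<Longrightarrow> \<bar>y\<bar> \<le> int n \<Longrightarrow> x < y \<Longrightarrow> sgn x = sgn y \<Longrightarrow> sp_apply u x < sp_apply u y"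
proof -
  assume u: "u \<in> signed_perms n" "sorted_wrt (<) u" and x: "x \<noteq> 0" "\<bar>x\<bar> \<le> int n"
    and y: "y \<noteq> 0" "\<bar>y\<bar> \<le> int n" and xy: "x < y" "sgn x = sgn y"
  have L: "length u = n" using sp_len[OF u(1)] .
  show ?thesis
  proof (cases "x > 0")
    case True
    then have "y > 0" using xy by (auto simp: sgn_if split: if_splits)
    then have "u ! (nat x - 1) < u ! (nat y - 1)"
      using True xy y L by (intro sorted_wrt_nth_less[OF u(2)]) auto
    then show ?thesis using True \<open>y > 0\<close> by (simp add: sp_apply_def)
  next
    case False
    then have "x < 0" "y < 0" using x xy by (auto simp: sgn_if split: if_splits)
    then have "u ! (nat (-y) - 1) < u ! (nat (-x) - 1)"
      using xy x L by (intro sorted_wrt_nth_less[OF u(2)]) auto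
    then show ?thesis using \<open>x < 0\<close> \<open>y < 0\<close> by (simp add: sp_apply_def)
  qed
qed

lemma St_SP: "Stilde n \<alpha> v = 1 \<Longrightarrow> v \<in> signed_perms n"
  by (auto simp: Stilde_def split: if_splits)

lemma St_sign: "signed_composition n \<alpha> \<Longrightarrow> Stilde n \<alpha> v = 1 \<Longrightarrow> j < n \<Longrightarrow> sgn (v ! j) = sg \<alpha> (Suc j)"
proof -
  assume sc: "signed_composition n \<alpha>" and v: "Stilde n \<alpha> v = 1" and j: "j < n"
  obtain i where i: "i < length \<alpha>" "psum (abs_comp \<alpha>) i < Suc j" "Suc j \<le> psum (abs_comp \<alpha>) (Suc i)"
    using blk_exists[OF sc, of "Suc j"] j by auto
  then have "sgn (wpos v (Suc j)) = sgn (\<alpha> ! i)" using v by (auto simp: Stilde_def split: if_splits)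
  then show ?thesis using sg_blk[OF sc i] by (simp add: wpos_def)
qed

lemma St_incr: "signed_composition n \<alpha> \<Longrightarrow> Stilde n \<alpha> v = 1 \<Longrightarrow> 1 \<le> j \<Longrightarrow> j < n \<Longrightarrow>
   j \<notin> Jcomp (abs_comp \<alpha>) \<Longrightarrow> v ! (j - 1) < v ! j \<and> sgn (v ! (j - 1)) = sgn (v ! j)"
proof -
  assume sc: "signed_composition n \<alpha>" and v: "Stilde n \<alpha> v = 1" and j: "1 \<le> j" "j < n"
    "j \<notin> Jcomp (abs_comp \<alpha>)"
  obtain i where i: "i < length \<alpha>" "psum (abs_comp \<alpha>) i < j" "j < psum (abs_comp \<alpha>) (Suc i)"
    using notJ_same_blk[OF sc j] by auto
  have c: "\<And>j'. psum (abs_comp \<alpha>) i < j' \<and> j' \<le> psum (abs_comp \<alpha>) (Suc i) \<longrightarrow>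
           sgn (wpos v j') = sgn (\<alpha> ! i) \<and>
           (j' < psum (abs_comp \<alpha>) (Suc i) \<longrightarrow> wpos v j' < wpos v (Suc j'))"
    using v i(1) by (auto simp: Stilde_def split: if_splits)
  have 1: "sgn (wpos v j) = sgn (\<alpha> ! i)" "wpos v j < wpos v (Suc j)" using c[of j] i by auto
  have 2: "sgn (wpos v (Suc j)) = sgn (\<alpha> ! i)" using c[of "Suc j"] i by auto
  show ?thesis using 1 2 j by (simp add: wpos_def)
qed


lemma img_shift: "(\<lambda>k. f (nat k - 1)) ` {1..int n} = f ` {0..<n}"
proof (rule set_eqI, rule iffI)
  fix y assume "y \<in> (\<lambda>k. f (nat k - 1)) ` {1..int n}"
  then obtain k where "k \<in> {1..int n}" "y = f (nat k - 1)" by auto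
  then show "y \<in> f ` {0..<n}" by (intro image_eqI[of _ _ "nat k - 1"]) auto
next
  fix y assume "y \<in> f ` {0..<n}"
  then obtain i where i: "i < n" "y = f i" by auto
  have "nat (1 + int i) = Suc i" by arith
  then show "y \<in> (\<lambda>k. f (nat k - 1)) ` {1..int n}" using i
    by (intro image_eqI[of _ _ "1 + int i"]) auto
qed

lemma set_nth_img: "length u = n \<Longrightarrow> set u = (\<lambda>i. u ! i) ` {0..<n}"
  by (metis map_nth set_map set_upt)

lemma X01: "X n J u \<noteq> 0 \<Longrightarrow> X n J u = 1" by (simp add: X_def split: if_splits)
lemma St01: "Stilde n \<alpha> u \<noteq> 0 \<Longrightarrow> Stilde n \<alpha> u = 1" by (simp add: Stilde_def split: if_splits)

lemma fwd: "signed_composition n \<alpha> \<Longrightarrow> X n {0} u = 1 \<Longrightarrow> Stilde n \<alpha> v = 1 \<Longrightarrow>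
   sp_comp u v \<in> signed_perms n \<and> Des n (sp_comp u v) \<subseteq> {0} \<union> Jcomp (abs_comp \<alpha>)"
proof -
  assume sc: "signed_composition n \<alpha>" and ux: "X n {0} u = 1" and vs: "Stilde n \<alpha> v = 1"
  have u: "u \<in> signed_perms n" "sorted_wrt (<) u" using ux incr_iff by auto
  have v: "v \<in> signed_perms n" using St_SP[OF vs] .
  have w: "sp_comp u v \<in> signed_perms n" using comp_SP[OF u(1) v] .
  have "Des n (sp_comp u v) \<subseteq> {0} \<union> Jcomp (abs_comp \<alpha>)"
  proof
    fix i assume i: "i \<in> Des n (sp_comp u v)"
    show "i \<in> {0} \<union> Jcomp (abs_comp \<alpha>)"
    proof (rule ccontr)
      assume ni: "i \<notin> {0} \<union> Jcomp (abs_comp \<alpha>)"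
      have i1: "1 \<le> i" "i < n" using i ni by (auto simp: Des_def)
      have "i + 1 \<le> n" using i1 by simp
      have inc: "v ! (i - 1) < v ! i \<and> sgn (v ! (i - 1)) = sgn (v ! i)"
        using St_incr[OF sc vs i1] ni by auto
      have a: "v ! (i - 1) \<noteq> 0 \<and> \<bar>v ! (i - 1)\<bar> \<le> int n" using sp_nth[OF v, of "i - 1"] i1 by simp
      have b: "v ! i \<noteq> 0 \<and> \<bar>v ! i\<bar> \<le> int n" using sp_nth[OF v, of i] i1 by simp
      have "sp_apply u (v ! (i - 1)) < sp_apply u (v ! i)"
        using sp_mono[OF u] a b inc by blast
      moreover have "wpos (sp_comp u v) i = sp_apply u (v ! (i - 1))"
        "wpos (sp_comp u v) (Suc i) = sp_apply u (v ! i)"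
        using i1 sp_len[OF v] by (auto simp: wpos_def sp_comp_def)
      ultimately show False using i by (simp add: Des_def)
    qed
  qed
  with w show ?thesis by simp
qed

definition tlist :: "int list \<Rightarrow> int list \<Rightarrow> int list" where
  "tlist \<alpha> w = map (\<lambda>j. sg \<alpha> (Suc j) * w ! j) [0..<length w]"

lemma set_u: "signed_composition n \<alpha> \<Longrightarrow> X n {0} u = 1 \<Longrightarrow> Stilde n \<alpha> v = 1 \<Longrightarrow>
   set u = set (tlist \<alpha> (sp_comp u v))"
proof -
  assume sc: "signed_composition n \<alpha>" and ux: "X n {0} u = 1" and vs: "Stilde n \<alpha> v = 1"
  have u: "u \<in> signed_perms n" "sorted_wrt (<) u" using ux incr_iff by auto
  have v: "v \<in> signed_perms n" using St_SP[OF vs] .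
  have Lv: "length v = n" using sp_len[OF v] .
  have e: "sg \<alpha> (Suc j) * sp_apply u (v ! j) = u ! (nat \<bar>v ! j\<bar> - 1)" if j: "j < n" for j
  proof -
    have "v ! j \<noteq> 0" using sp_nth[OF v j] by simp
    moreover have "sg \<alpha> (Suc j) = sgn (v ! j)" using St_sign[OF sc vs j] by simp
    ultimately show ?thesis by (simp add: sp_apply_def sgn_if)
  qed
  have "set (tlist \<alpha> (sp_comp u v)) = (\<lambda>j. u ! (nat \<bar>v ! j\<bar> - 1)) ` {0..<n}"
    using e Lv by (simp add: tlist_def sp_comp_def)
  also have "\<dots> = (\<lambda>x. u ! (nat \<bar>x\<bar> - 1)) ` set v" using set_nth_img[OF Lv] by (simp add: image_image)
  also have "\<dots> = (\<lambda>k. u ! (nat k - 1)) ` (abs ` set v)" by (simp add: image_image)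
  also have "abs ` set v = {1..int n}" using v by (simp add: signed_perms_def)
  also have "(\<lambda>k. u ! (nat k - 1)) ` {1..int n} = (\<lambda>i. u ! i) ` {0..<n}" by (rule img_shift)
  also have "\<dots> = set u" using set_nth_img[OF sp_len[OF u(1)]] by simp
  finally show ?thesis by simp
qed

lemma uniq: "signed_composition n \<alpha> \<Longrightarrow> X n {0} u = 1 \<Longrightarrow> Stilde n \<alpha> v = 1 \<Longrightarrow>
   X n {0} u' = 1 \<Longrightarrow> Stilde n \<alpha> v' = 1 \<Longrightarrow> sp_comp u v = sp_comp u' v' \<Longrightarrow> u = u' \<and> v = v'"
proof -
  assume sc: "signed_composition n \<alpha>" and ux: "X n {0} u = 1" and vs: "Stilde n \<alpha> v = 1"
    and ux': "X n {0} u' = 1" and vs': "Stilde n \<alpha> v' = 1" and e: "sp_comp u v = sp_comp u' v'"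
  have "set u = set u'" using set_u[OF sc ux vs] set_u[OF sc ux' vs'] e by simp
  then have uu: "u = u'" using ux ux' incr_iff strict_sorted_equal by metis
  then have "v = v'" using comp_inj[of u n v v'] e ux St_SP[OF vs] St_SP[OF vs'] incr_iff by auto
  with uu show ?thesis by simp
qed


definition posn :: "int list \<Rightarrow> int \<Rightarrow> nat" where
  "posn u x = (LEAST k. k < length u \<and> u ! k = x)"

lemma posn_in: "x \<in> set u \<Longrightarrow> posn u x < length u \<and> u ! posn u x = x"
  unfolding posn_def by (rule LeastI_ex) (simp add: in_set_conv_nth)

lemma posn_nth: "distinct u \<Longrightarrow> k < length u \<Longrightarrow> posn u (u ! k) = k"
  using posn_in[of "u ! k" u] nth_eq_iff_index_eq[of u] by auto

lemma posn_mono: "sorted_wrt (<) u \<Longrightarrow> x \<in> set u \<Longrightarrow> y \<in> set u \<Longrightarrow> x < y \<Longrightarrow> posn u x < posn u y"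
proof (rule ccontr)
  assume s: "sorted_wrt (<) u" and x: "x \<in> set u" and y: "y \<in> set u" and xy: "x < y"
    and n: "\<not> posn u x < posn u y"
  show False
  proof (cases "posn u x = posn u y")
    case True then show False using posn_in[OF x] posn_in[OF y] xy by simp
  next
    case False
    then have "posn u y < posn u x" using n by simp
    then have "u ! posn u y < u ! posn u x" using posn_in[OF x] by (intro sorted_wrt_nth_less[OF s]) auto
    then show False using posn_in[OF x] posn_in[OF y] xy by simp
  qed
qed

lemma exist: "signed_composition n \<alpha> \<Longrightarrow> w \<in> signed_perms n \<Longrightarrow>
   Des n w \<subseteq> {0} \<union> Jcomp (abs_comp \<alpha>) \<Longrightarrow>
   \<exists>u v. X n {0} u = 1 \<and> Stilde n \<alpha> v = 1 \<and> sp_comp u v = w"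
proof -
  assume sc: "signed_composition n \<alpha>" and w: "w \<in> signed_perms n"
    and dw: "Des n w \<subseteq> {0} \<union> Jcomp (abs_comp \<alpha>)"
  define t where "t = tlist \<alpha> w"
  have Lw: "length w = n" using sp_len[OF w] .
  have Lt: "length t = n" using Lw by (simp add: t_def tlist_def)
  have tn: "t ! j = sg \<alpha> (Suc j) * w ! j" if "j < n" for j using that Lw by (simp add: t_def tlist_def)
  have mat: "map abs t = map abs w"
    by (rule nth_equalityI) (auto simp: Lt Lw tn abs_mult sg_pm)
  have dt: "distinct t" using sp_abs_dist[OF w] mat distinct_map by metis
  define u where "u = sorted_list_of_set (set t)"
  have su: "set u = set t" by (simp add: u_def)
  have ssu: "sorted_wrt (<) u" by (simp add: u_def strict_sorted_list_of_set)
  have Lu: "length u = n" using dt Lt by (simp add: u_def distinct_card)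
  have du: "distinct u" using ssu strict_sorted_iff by blast
  have uSP: "u \<in> signed_perms n"
  proof -
    have "abs ` set u = set (map abs t)" using su by simp
    also have "\<dots> = {1..int n}" using mat w by (simp add: signed_perms_def)
    finally show ?thesis using Lu by (simp add: signed_perms_def)
  qed
  have ux: "X n {0} u = 1" using incr_iff uSP ssu by blast
  define v where "v = map (\<lambda>j. sg \<alpha> (Suc j) * (int (posn u (t ! j)) + 1)) [0..<n]"
  have Lv: "length v = n" by (simp add: v_def)
  have vn: "v ! j = sg \<alpha> (Suc j) * (int (posn u (t ! j)) + 1)" if "j < n" for j
    using that by (simp add: v_def)
  have tin: "t ! j \<in> set u" if "j < n" for j using that Lt su by auto
  have comp: "sp_comp u v = w"
  proof (rule nth_equalityI)
    show "length (sp_comp u v) = length w" using Lv Lw by (simp add: sp_comp_def)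
    fix j assume "j < length (sp_comp u v)"
    then have j: "j < n" using Lv by (simp add: sp_comp_def)
    have s: "sg \<alpha> (Suc j) = 1 \<or> sg \<alpha> (Suc j) = -1" by (simp add: sg_def)
    have "nat \<bar>v ! j\<bar> - 1 = posn u (t ! j)" using vn[OF j] s by (auto simp: abs_mult)
    moreover have "sgn (v ! j) = sg \<alpha> (Suc j)" using vn[OF j] s by (auto simp: sgn_mult)
    moreover have "v ! j \<noteq> 0" using vn[OF j] s by auto
    ultimately have "sp_apply u (v ! j) = sg \<alpha> (Suc j) * t ! j"
      using posn_in[OF tin[OF j]] by (simp add: sp_apply_def)
    also have "\<dots> = w ! j" using tn[OF j] s by auto
    finally show "sp_comp u v ! j = w ! j" using j Lv by (simp add: sp_comp_def)
  qed
  have vSP: "v \<in> signed_perms n"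
  proof -
    have "abs ` set v = (\<lambda>j. int (posn u (t ! j)) + 1) ` {0..<n}"
    proof -
      have "abs ` set v = (\<lambda>j. \<bar>v ! j\<bar>) ` {0..<n}" using set_nth_img[OF Lv] by (simp add: image_image)
      also have "\<dots> = (\<lambda>j. int (posn u (t ! j)) + 1) ` {0..<n}"
        by (rule image_cong) (auto simp: vn abs_mult sg_pm)
      finally show ?thesis .
    qed
    also have "\<dots> = (\<lambda>x. int (posn u x) + 1) ` set t" using set_nth_img[OF Lt] by (simp add: image_image)
    also have "\<dots> = (\<lambda>x. int (posn u x) + 1) ` ((\<lambda>i. u ! i) ` {0..<n})" using su set_nth_img[OF Lu] by simp
    also have "\<dots> = (\<lambda>i. int i + 1) ` {0..<n}" using posn_nth[OF du] Lu by (simp add: image_image)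
    also have "\<dots> = {1..int n}"
    proof -
      have "(\<lambda>i. int i + 1) ` {0..<n} = (\<lambda>k. int (nat k - 1) + 1) ` {1..int n}"
        using img_shift[of "\<lambda>i. int i + 1" n] by simp
      also have "\<dots> = (\<lambda>k. k) ` {1..int n}" by (rule image_cong) (simp, simp, arith)
      also have "\<dots> = {1..int n}" by simp
      finally show ?thesis .
    qed
    finally show ?thesis using Lv by (simp add: signed_perms_def)
  qed
  have cond: "\<forall>i < length \<alpha>. \<forall>j.
         psum (abs_comp \<alpha>) i < j \<and> j \<le> psum (abs_comp \<alpha>) (Suc i) \<longrightarrow>
           sgn (wpos v j) = sgn (\<alpha> ! i) \<and>
           (j < psum (abs_comp \<alpha>) (Suc i) \<longrightarrow> wpos v j < wpos v (Suc j))"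
  proof (intro allI impI conjI)
    fix i j assume i: "i < length \<alpha>" and jb: "psum (abs_comp \<alpha>) i < j \<and> j \<le> psum (abs_comp \<alpha>) (Suc i)"
    have j1: "1 \<le> j" "j \<le> n" using jb psum_le_n[OF sc, of "Suc i"] by auto
    have sgj: "sg \<alpha> j = sgn (\<alpha> ! i)" using sg_blk[OF sc i] jb by auto
    have sa: "sgn (\<alpha> ! i) = 1 \<or> sgn (\<alpha> ! i) = -1" using sc_nz[OF sc i] by (auto simp: sgn_if)
    have wv: "wpos v j = v ! (j - 1)" using j1 by (simp add: wpos_def)
    have vj: "v ! (j - 1) = sg \<alpha> j * (int (posn u (t ! (j - 1))) + 1)" using vn[of "j - 1"] j1 by simp
    show "sgn (wpos v j) = sgn (\<alpha> ! i)" using wv vj sgj sa by (auto simp: sgn_mult)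
    assume jl: "j < psum (abs_comp \<alpha>) (Suc i)"
    have jn: "j < n" using jl psum_le_n[OF sc, of "Suc i"] by simp
    have sgj': "sg \<alpha> (Suc j) = sgn (\<alpha> ! i)" using sg_blk[OF sc i, of "Suc j"] jb jl by auto
    have nJ: "j \<notin> Jcomp (abs_comp \<alpha>)" using same_blk_notJ[OF i] jb jl by auto
    have "j \<notin> Des n w" using dw nJ j1 by auto
    then have "w ! (j - 1) \<le> w ! j" using j1 jn by (auto simp: Des_def wpos_def)
    moreover have "w ! (j - 1) \<noteq> w ! j" using nth_eq_iff_index_eq[OF sp_dist[OF w]] Lw j1 jn by auto
    ultimately have wl: "w ! (j - 1) < w ! j" by simp
    have t1: "t ! (j - 1) = sgn (\<alpha> ! i) * w ! (j - 1)" using tn[of "j - 1"] j1 sgj by simp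
    have t2: "t ! j = sgn (\<alpha> ! i) * w ! j" using tn[OF jn] sgj' by simp
    have vj2: "v ! j = sgn (\<alpha> ! i) * (int (posn u (t ! j)) + 1)" using vn[OF jn] sgj' by simp
    have wv2: "wpos v (Suc j) = v ! j" by (simp add: wpos_def)
    have i1: "t ! (j - 1) \<in> set u" "t ! j \<in> set u" using tin j1 jn by auto
    show "wpos v j < wpos v (Suc j)"
      using sa
    proof
      assume p: "sgn (\<alpha> ! i) = 1"
      then have "posn u (t ! (j - 1)) < posn u (t ! j)" using posn_mono[OF ssu i1] t1 t2 wl by simp
      then show ?thesis using wv wv2 vj vj2 sgj p by simp
    next
      assume p: "sgn (\<alpha> ! i) = -1"
      then have "posn u (t ! j) < posn u (t ! (j - 1))" using posn_mono[OF ssu i1(2) i1(1)] t1 t2 wl by simp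
      then show ?thesis using wv wv2 vj vj2 sgj p by simp
    qed
  qed
  have vst: "Stilde n \<alpha> v = 1" unfolding Stilde_def using vSP cond by simp
  show ?thesis using ux vst comp by blast
qed


lemma fin_SP: "finite (signed_perms n)"
proof (rule finite_subset)
  show "signed_perms n \<subseteq> {xs. set xs \<subseteq> {-int n..int n} \<and> length xs = n}"
  proof
    fix w assume w: "w \<in> signed_perms n"
    have "set w \<subseteq> {-int n..int n}"
    proof
      fix x assume "x \<in> set w"
      then obtain k where "k < n" "x = w ! k" using sp_len[OF w] by (auto simp: in_set_conv_nth)
      then show "x \<in> {-int n..int n}" using sp_nth[OF w] by fastforce
    qed
    then show "w \<in> {xs. set xs \<subseteq> {-int n..int n} \<and> length xs = n}" using sp_len[OF w] by simp
  qed
  show "finite {xs. set xs \<subseteq> {-int n..int n} \<and> length xs = n}"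
    by (rule finite_lists_length_eq) simp
qed

theorem proposition7p6:
  fixes n :: nat and \<alpha> :: "int list"
  assumes "signed_composition n \<alpha>"
  shows "qb_mult n (X n {0}) (Stilde n \<alpha>) = X0 n (abs_comp \<alpha>)"
proof (rule ext)
  fix w
  note sc = assms
  show "qb_mult n (X n {0}) (Stilde n \<alpha>) w = X0 n (abs_comp \<alpha>) w"
  proof (cases "w \<in> signed_perms n \<and> Des n w \<subseteq> {0} \<union> Jcomp (abs_comp \<alpha>)")
    case True
    then have x0: "X0 n (abs_comp \<alpha>) w = 1" by (simp add: X0_def X_def Un_commute)
    obtain u0 v0 where uv: "X n {0} u0 = 1" "Stilde n \<alpha> v0 = 1" "sp_comp u0 v0 = w"
      using exist[OF sc] True by blast
    have "qb_mult n (X n {0}) (Stilde n \<alpha>) w =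
       (\<Sum>p \<in> signed_perms n \<times> signed_perms n. if (u0, v0) = p then 1 else 0)"
      unfolding qb_mult_def
    proof (rule sum.cong[OF refl])
      fix p assume "p \<in> signed_perms n \<times> signed_perms n"
      obtain u v where p: "p = (u, v)" by (cases p)
      show "(case p of (u, v) \<Rightarrow> if sp_comp u v = w then X n {0} u * Stilde n \<alpha> v else 0) =
            (if (u0, v0) = p then 1 else 0)"
      proof (cases "(u0, v0) = p")
        case True then show ?thesis using uv p by auto
      next
        case False
        have "\<not> (sp_comp u v = w \<and> X n {0} u * Stilde n \<alpha> v \<noteq> 0)"
        proof
          assume a: "sp_comp u v = w \<and> X n {0} u * Stilde n \<alpha> v \<noteq> 0"
          then have "X n {0} u = 1" "Stilde n \<alpha> v = 1" using X01 St01 by auto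
          then have "u0 = u \<and> v0 = v" using uniq[OF sc uv(1,2)] uv(3) a by metis
          then show False using False p by simp
        qed
        then show ?thesis using False p by auto
      qed
    qed
    also have "\<dots> = 1" using uv St_SP[OF uv(2)] incr_iff[of n u0] fin_SP by simp
    finally show ?thesis using x0 by simp
  next
    case False
    then have x0: "X0 n (abs_comp \<alpha>) w = 0" by (auto simp: X0_def X_def Un_commute)
    have "qb_mult n (X n {0}) (Stilde n \<alpha>) w = 0"
      unfolding qb_mult_def
    proof (rule sum.neutral, rule ballI)
      fix p assume "p \<in> signed_perms n \<times> signed_perms n"
      obtain u v where p: "p = (u, v)" by (cases p)
      have "\<not> (sp_comp u v = w \<and> X n {0} u * Stilde n \<alpha> v \<noteq> 0)"
      proof
        assume a: "sp_comp u v = w \<and> X n {0} u * Stilde n \<alpha> v \<noteq> 0"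
        then have "X n {0} u = 1" "Stilde n \<alpha> v = 1" using X01 St01 by auto
        then show False using fwd[OF sc] a False by blast
      qed
      then show "(case p of (u, v) \<Rightarrow> if sp_comp u v = w then X n {0} u * Stilde n \<alpha> v else 0) = 0"
        using p by auto
    qed
    then show ?thesis using x0 by simp
  qed
qed

end
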